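(* Let $\mathcal S$ be a split system on $X$ that is circular with respect to a circular ordering $\pi_1$ of $X$, and let $\pi_2$ be another circular ordering of $X$. Then $\mathcal S$ is circular with respect to $\pi_2$ if and only if $\pi_2$ can be obtained from $\pi_1$ by a finite sequence of twists, each of which is admissible for $\mathcal S$ with respect to the ordering current at that step.
   Context: $X$ is a finite set of $n\ge 4$ labels. A split of $X$ is an unordered partition $\{A,B\}$ of $X$ into two nonempty sets; a split system is a set of splits. Two splits $\{A_1,B_1\}$, $\{A_2,B_2\}$ are compatible if at least one of $A_1\cap A_2$, $A_1\cap B_2$, $B_1\cap A_2$, $B_1\cap B_2$ is empty. A circular ordering of $X$ is a cyclic arrangement $\pi=(x_1,\dots,x_n)$ of the elements of $X$, considered up to rotation and reflection. A split is circular with respect to $\pi$ if it is of the form $\{\{x_{i+1},\dots,x_j\},\,X\setminus\{x_{i+1},\dots,x_j\}\}$ (indices mod $n$); a split system is circular with respect to $\pi$ if all its splits are. (Geometrically: label the edges of a regular $n$-gon cyclically by $x_1,\dots,x_n$; nontrivial splits circular w.r.t. $\pi$ are the diagonals, a diagonal separating the edge labels into the two parts; two such diagonals cross iff the splits are incompatible.) For a set $I=\{x_{i+1},\dots,x_j\}$ of cyclically consecutive elements of $\pi$ with $2\le |I|\le n-2$, the twist of $\pi$ along $I$ is the circular ordering $(x_1,\dots,x_i,x_j,x_{j-1},\dots,x_{i+1},x_{j+1},\dots,x_n)$ obtained by reversing the block $I$ (geometrically: cut the labeled polygon along the diagonal of $\{I,X\setminus I\}$, reflect one piece and reglue). Such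 a twist is admissible for a split system $\mathcal S$ circular w.r.t. $\pi$ if the split $\{I,X\setminus I\}$ (which may or may not belong to $\mathcal S$) is compatible with every split of $\mathcal S$, i.e. its diagonal crosses no diagonal representing $\mathcal S$. *)

theory Defs
  imports Main
begin

definition is_split :: "'a set \<Rightarrow> 'a set set \<Rightarrow> bool" where
  "is_split X s \<longleftrightarrow> (\<exists>A. A \<noteq> {} \<and> A \<subseteq> X \<and> A \<noteq> X \<and> s = {A, X - A})"

definition split_system :: "'a set \<Rightarrow> 'a set set set \<Rightarrow> bool" where
  "split_system X S \<longleftrightarrow> (\<forall>s\<in>S. is_split X s)"

definition compatible :: "'a set set \<Rightarrow> 'a set set \<Rightarrow> bool" where
  "compatible s1 s2 \<longleftrightarrow> (\<exists>A1\<in>s1. \<exists>A2\<in>s2. A1 \<inter> A2 = {})"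

text \<open>A circular ordering of X is represented by a list enumerating X without repetitions,
  read cyclically; two lists represent the same circular ordering iff they agree up to
  rotation and reflection.\<close>
definition circ_ordering :: "'a set \<Rightarrow> 'a list \<Rightarrow> bool" where
  "circ_ordering X xs \<longleftrightarrow> distinct xs \<and> set xs = X"

definition circ_equiv :: "'a list \<Rightarrow> 'a list \<Rightarrow> bool" where
  "circ_equiv xs ys \<longleftrightarrow> (\<exists>k. ys = rotate k xs \<or> ys = rotate k (rev xs))"

definition cyc_interval :: "'a list \<Rightarrow> nat \<Rightarrow> nat \<Rightarrow> 'a set" where
  "cyc_interval xs k m = set (take m (rotate k xs))"

definition circular_split :: "'a set \<Rightarrow> 'a list \<Rightarrow> 'a set set \<Rightarrow> bool" where
  "circular_split X xs s \<longleftrightarrow>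
     is_split X s \<and> (\<exists>k m. s = {cyc_interval xs k m, X - cyc_interval xs k m})"

definition circular_system :: "'a set \<Rightarrow> 'a list \<Rightarrow> 'a set set set \<Rightarrow> bool" where
  "circular_system X xs S \<longleftrightarrow> (\<forall>s\<in>S. circular_split X xs s)"

text \<open>Twist of xs along the block I = cyc_interval xs k m (2 \<le> m \<le> n-2): the block is reversed.
  The result is given up to rotation (rotated so that the block starts the list).\<close>
definition twist :: "'a list \<Rightarrow> nat \<Rightarrow> nat \<Rightarrow> 'a list" where
  "twist xs k m = rev (take m (rotate k xs)) @ drop m (rotate k xs)"

definition admissible_twist_step :: "'a set \<Rightarrow> 'a set set set \<Rightarrow> 'a list \<Rightarrow> 'a list \<Rightarrow> bool" where
  "admissible_twist_step X S xs ys \<longleftrightarrow>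
     circular_system X xs S \<and>
     (\<exists>k m. 2 \<le> m \<and> m + 2 \<le> length xs \<and>
        (\<forall>s\<in>S. compatible {cyc_interval xs k m, X - cyc_interval xs k m} s) \<and>
        circ_equiv (twist xs k m) ys)"

definition obtainable_by_admissible_twists :: "'a set \<Rightarrow> 'a set set set \<Rightarrow> 'a list \<Rightarrow> 'a list \<Rightarrow> bool" where
  "obtainable_by_admissible_twists X S xs ys \<longleftrightarrow>
     (\<exists>zs. (admissible_twist_step X S)\<^sup>*\<^sup>* xs zs \<and> circ_equiv zs ys)"

end

theory Submission
  imports Defs
begin


lemma rev_rotate_conv: "rev (rotate b xs) = rotate (length xs - b mod length xs) (rev xs)"
proof (cases "xs = []")
  case True then show ?thesis by simp
next
  case False
  then have N: "length xs > 0" by simp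
  show ?thesis
  proof (cases "b mod length xs = 0")
    case True
    then show ?thesis using N by (simp add: rotate_conv_mod[of b xs])
  next
    case F: False
    have m: "(length xs - b mod length xs) mod length xs = length xs - b mod length xs"
      using F N by simp
    have "rotate (length xs - b mod length xs) (rev xs)
        = rev (rotate (length xs - (length xs - b mod length xs)) xs)"
      by (simp add: rotate_rev m)
    also have "length xs - (length xs - b mod length xs) = b mod length xs"
      using N by simp
    finally show ?thesis by (simp add: rotate_conv_mod[of b xs])
  qed
qed

lemma rotate_back: "rotate (length xs - c mod length xs) (rotate c xs) = xs"
proof (cases "xs = []")
  case True then show ?thesis by simp
next
  case False
  then have N: "length xs > 0" by simp
  have "(length xs - c mod length xs + c) mod length xs = 0"
  proof -
    have "length xs - c mod length xs + c = length xs + (c - c mod length xs)"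
      using N by simp
    also have "c - c mod length xs = length xs * (c div length xs)"
      by (simp add: minus_mod_eq_mult_div)
    finally show ?thesis by simp
  qed
  then show ?thesis by (simp add: rotate_rotate)
qed

lemma ce_refl: "circ_equiv xs xs"
  unfolding circ_equiv_def by (rule exI[of _ 0]) simp

lemma ce_rot: "circ_equiv xs (rotate k xs)"
  unfolding circ_equiv_def by blast

lemma ce_rotrev: "circ_equiv xs (rotate k (rev xs))"
  unfolding circ_equiv_def by blast

lemma ce_sym: assumes "circ_equiv xs ys" shows "circ_equiv ys xs"
proof -
  from assms obtain k where "ys = rotate k xs \<or> ys = rotate k (rev xs)"
    unfolding circ_equiv_def by blast
  then show ?thesis
  proof
    assume y: "ys = rotate k xs"
    have "xs = rotate (length xs - k mod length xs) ys" using y rotate_back by metis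
    then show ?thesis by (metis ce_rot)
  next
    assume y: "ys = rotate k (rev xs)"
    have "rev ys = rotate (length xs - k mod length xs) xs"
      using y rev_rotate_conv[of k "rev xs"] by simp
    then have "xs = rotate (length xs - (length xs - k mod length xs) mod length xs) (rev ys)"
      using rotate_back[where c="length xs - k mod length xs" and xs=xs] by simp
    then show ?thesis by (metis ce_rotrev)
  qed
qed

lemma ce_trans: assumes "circ_equiv xs ys" "circ_equiv ys zs" shows "circ_equiv xs zs"
proof -
  from assms(1) obtain a where a: "ys = rotate a xs \<or> ys = rotate a (rev xs)"
    unfolding circ_equiv_def by blast
  from assms(2) obtain b where b: "zs = rotate b ys \<or> zs = rotate b (rev ys)"
    unfolding circ_equiv_def by blast
  show ?thesis
    using a b
  proof (elim disjE)
    assume "ys = rotate a xs" "zs = rotate b ys"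
    then show ?thesis by (simp add: rotate_rotate ce_rot)
  next
    assume "ys = rotate a xs" "zs = rotate b (rev ys)"
    then show ?thesis by (simp add: rotate_rotate ce_rotrev rev_rotate_conv)
  next
    assume "ys = rotate a (rev xs)" "zs = rotate b ys"
    then show ?thesis by (simp add: rotate_rotate ce_rotrev)
  next
    assume "ys = rotate a (rev xs)" "zs = rotate b (rev ys)"
    then show ?thesis by (simp add: rotate_rotate ce_rot rev_rotate_conv)
  qed
qed

lemma ce_length: "circ_equiv xs ys \<Longrightarrow> length ys = length xs"
  unfolding circ_equiv_def by auto
lemma ce_set: "circ_equiv xs ys \<Longrightarrow> set ys = set xs"
  unfolding circ_equiv_def by auto
lemma ce_distinct: "circ_equiv xs ys \<Longrightarrow> distinct ys = distinct xs"
  unfolding circ_equiv_def by auto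

lemma ci_rot: "cyc_interval (rotate r xs) k m = cyc_interval xs (k + r) m"
  unfolding cyc_interval_def by (simp add: rotate_rotate)

lemma ci_rev: "\<exists>k' m'. cyc_interval (rev xs) k m = cyc_interval xs k' m'"
proof -
  let ?N = "length xs"
  define q where "q = ?N - k mod ?N"
  define ys where "ys = rotate q xs"
  have rk: "rotate k (rev xs) = rev ys"
    unfolding ys_def q_def using rotate_rev[of k xs] by simp
  have ly: "length ys = ?N" unfolding ys_def by simp
  have "cyc_interval (rev xs) k m = set (drop (?N - m) ys)"
    unfolding cyc_interval_def rk by (simp add: take_rev ly)
  also have "\<dots> = cyc_interval ys (?N - min m ?N) (min m ?N)"
  proof (cases "min m ?N = 0")
    case True
    then show ?thesis unfolding cyc_interval_def using ly by auto
  next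
    case False
    then have lt: "?N - min m ?N < ?N" by auto
    have "rotate (?N - min m ?N) ys = drop (?N - min m ?N) ys @ take (?N - min m ?N) ys"
      using lt ly by (simp add: rotate_drop_take)
    moreover have "drop (?N - m) ys = drop (?N - min m ?N) ys" by (simp add: min_def)
    ultimately show ?thesis unfolding cyc_interval_def using ly by (simp add: min_def)
  qed
  also have "\<dots> = cyc_interval xs (?N - min m ?N + q) (min m ?N)"
    unfolding ys_def ci_rot ..
  finally show ?thesis by blast
qed

lemma ci_equiv: assumes "circ_equiv xs ys" shows "\<exists>k' m'. cyc_interval ys k m = cyc_interval xs k' m'"
proof -
  from assms obtain a where "ys = rotate a xs \<or> ys = rotate a (rev xs)"
    unfolding circ_equiv_def by blast
  then show ?thesis
  proof
    assume "ys = rotate a xs" then show ?thesis by (simp add: ci_rot) blast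
  next
    assume "ys = rotate a (rev xs)" then show ?thesis by (simp add: ci_rot ci_rev)
  qed
qed

lemma sys_equiv: assumes "circ_equiv xs ys" "circular_system X xs S"
  shows "circular_system X ys S"
  unfolding circular_system_def
proof
  fix s assume "s \<in> S"
  then have "circular_split X xs s" using assms(2) unfolding circular_system_def by blast
  then obtain k m where sp: "is_split X s" and s: "s = {cyc_interval xs k m, X - cyc_interval xs k m}"
    unfolding circular_split_def by blast
  obtain k' m' where "cyc_interval xs k m = cyc_interval ys k' m'"
    using ci_equiv[OF ce_sym[OF assms(1)]] by blast
  then show "circular_split X ys s" unfolding circular_split_def using sp s by auto
qed



definition lseg :: "'a list \<Rightarrow> nat \<Rightarrow> nat \<Rightarrow> 'a set" where
  "lseg L lo hi = set (take (hi - lo) (drop lo L))"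

lemma lseg_img: "lseg L lo hi = (\<lambda>i. L ! i) ` {lo..<min hi (length L)}"
proof -
  have "x \<in> lseg L lo hi \<longleftrightarrow> (\<exists>i. lo \<le> i \<and> i < min hi (length L) \<and> x = L ! i)" for x
  proof
    assume "x \<in> lseg L lo hi"
    then obtain p where p: "p < length (take (hi - lo) (drop lo L))" "x = take (hi - lo) (drop lo L) ! p"
      unfolding lseg_def by (metis in_set_conv_nth)
    then show "\<exists>i. lo \<le> i \<and> i < min hi (length L) \<and> x = L ! i"
      by (intro exI[of _ "lo + p"]) auto
  next
    assume "\<exists>i. lo \<le> i \<and> i < min hi (length L) \<and> x = L ! i"
    then obtain i where i: "lo \<le> i" "i < min hi (length L)" "x = L ! i" by blast
    then have "take (hi - lo) (drop lo L) ! (i - lo) = x" by auto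
    moreover have "i - lo < length (take (hi - lo) (drop lo L))" using i by auto
    ultimately show "x \<in> lseg L lo hi" unfolding lseg_def by (metis nth_mem)
  qed
  then show ?thesis by auto
qed

lemma lseg_mem:
  assumes "distinct L" "i < length L"
  shows "L ! i \<in> lseg L lo hi \<longleftrightarrow> lo \<le> i \<and> i < hi"
proof -
  have "L ! i \<in> lseg L lo hi \<longleftrightarrow> (\<exists>j. lo \<le> j \<and> j < min hi (length L) \<and> L ! i = L ! j)"
    unfolding lseg_img by auto
  also have "\<dots> \<longleftrightarrow> lo \<le> i \<and> i < hi"
    using assms nth_eq_iff_index_eq by fastforce
  finally show ?thesis .
qed

lemma lseg_sub: "lseg L lo hi \<subseteq> set L"
  unfolding lseg_def by (meson in_set_dropD in_set_takeD subsetI)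

lemma img_compl:
  assumes "distinct L" "J \<subseteq> {..<length L}"
  shows "set L - (\<lambda>i. L ! i) ` J = (\<lambda>i. L ! i) ` ({..<length L} - J)"
proof -
  have inj: "inj_on (\<lambda>i. L ! i) {..<length L}" using assms(1)
    by (simp add: inj_on_def nth_eq_iff_index_eq)
  have "set L = (\<lambda>i. L ! i) ` {..<length L}" by (auto simp: in_set_conv_nth)
  then show ?thesis using inj_on_image_set_diff[OF inj _ assms(2)] by auto
qed

lemma ci_img:
  assumes "L \<noteq> []"
  shows "cyc_interval L k m = (\<lambda>p. L ! ((k mod length L + p) mod length L)) ` {..<min m (length L)}"
proof -
  have "cyc_interval L k m = (\<lambda>p. rotate k L ! p) ` {..<min m (length L)}"
    unfolding cyc_interval_def using lseg_img[of "rotate k L" 0 m] by (simp add: lseg_def atLeast0LessThan)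
  also have "\<dots> = (\<lambda>p. L ! ((k mod length L + p) mod length L)) ` {..<min m (length L)}"
    by (intro image_cong refl) (simp add: nth_rotate mod_add_left_eq)
  finally show ?thesis .
qed

lemma ci_lin:
  assumes "distinct L" "L \<noteq> []"
  shows "\<exists>lo hi. 1 \<le> lo \<and> lo \<le> hi \<and> hi \<le> length L \<and>
     (cyc_interval L k m = lseg L lo hi \<or> set L - cyc_interval L k m = lseg L lo hi)"
proof -
  define N where "N = length L"
  define k' where "k' = k mod N"
  define p0 where "p0 = min m N"
  have N: "N > 0" using assms(2) unfolding N_def by simp
  have k': "k' < N" unfolding k'_def using N by simp
  have p0: "p0 \<le> N" unfolding p0_def by simp
  have ci: "cyc_interval L k m = (\<lambda>i. L ! i) ` ((\<lambda>p. (k' + p) mod N) ` {..<p0})"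
    unfolding ci_img[OF assms(2)] k'_def p0_def N_def image_image ..
  show ?thesis
  proof (cases "k' + p0 \<le> N")
    case True
    have J: "(\<lambda>p. (k' + p) mod N) ` {..<p0} = {k'..<k'+p0}"
    proof
      show "(\<lambda>p. (k' + p) mod N) ` {..<p0} \<subseteq> {k'..<k' + p0}"
      proof
        fix x assume "x \<in> (\<lambda>p. (k' + p) mod N) ` {..<p0}"
        then obtain p where p: "p < p0" "x = (k' + p) mod N" by blast
        then have "k' + p < N" using True by linarith
        then have "x = k' + p" using p by simp
        then show "x \<in> {k'..<k' + p0}" using p by simp
      qed
      show "{k'..<k' + p0} \<subseteq> (\<lambda>p. (k' + p) mod N) ` {..<p0}"
      proof
        fix x assume x: "x \<in> {k'..<k' + p0}"
        then have "x < N" using True by simp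
        then have "x = (k' + (x - k')) mod N" "x - k' < p0" using x by auto
        then show "x \<in> (\<lambda>p. (k' + p) mod N) ` {..<p0}" by blast
      qed
    qed
    have mn: "min (k' + p0) (length L) = k' + p0" using True N_def by simp
    have A: "cyc_interval L k m = lseg L k' (k' + p0)"
      unfolding ci J lseg_img mn ..
    show ?thesis
    proof (cases "k' = 0")
      case False
      then have "1 \<le> k'" by simp
      moreover have "k' \<le> k'+p0" "k'+p0 \<le> length L" using True N_def by simp_all
      ultimately show ?thesis using A by blast
    next
      case k0: True
      show ?thesis
      proof (cases "p0 = 0")
        case True
        have "cyc_interval L k m = lseg L 1 1" using A True k0 by (simp add: lseg_def)
        moreover have "1 \<le> length L" using assms(2) by (simp add: Suc_le_eq)
        ultimately show ?thesis by (intro exI[of _ 1] exI[of _ 1]) auto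
      next
        case False
        have sub: "{0..<p0} \<subseteq> {..<length L}" using p0 N_def by auto
        have e: "{..<length L} - {0..<p0} = {p0..<min N (length L)}" using p0 N_def by auto
        have m1: "min p0 (length L) = p0" using p0 N_def by simp
        have "lseg L k' (k' + p0) = (\<lambda>i. L ! i) ` {0..<p0}"
          unfolding lseg_img k0 using m1 by simp
        then have "set L - cyc_interval L k m = (\<lambda>i. L ! i) ` ({..<length L} - {0..<p0})"
          using A img_compl[OF assms(1) sub] by simp
        also have "\<dots> = lseg L p0 N" unfolding e lseg_img ..
        finally have "set L - cyc_interval L k m = lseg L p0 N" .
        moreover have "1 \<le> p0" "p0 \<le> N" "N \<le> length L" using False p0 N_def by auto
        ultimately show ?thesis by blast
      qed
    qed
  next
    case False
    have J: "(\<lambda>p. (k' + p) mod N) ` {..<p0} = {..<N} - {k'+p0-N..<k'}"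
    proof
      show "(\<lambda>p. (k' + p) mod N) ` {..<p0} \<subseteq> {..<N} - {k' + p0 - N..<k'}"
      proof
        fix x assume "x \<in> (\<lambda>p. (k' + p) mod N) ` {..<p0}"
        then obtain p where p: "p < p0" "x = (k' + p) mod N" by blast
        show "x \<in> {..<N} - {k' + p0 - N..<k'}"
        proof (cases "k' + p < N")
          case True
          then have "x = k' + p" using p by simp
          then show ?thesis using True by simp
        next
          case F: False
          have "k' + p < N + N" using k' p p0 by linarith
          then have "(k' + p) mod N = k' + p - N" using F
            by (simp add: mod_if)
          then have "x = k' + p - N" using p by simp
          then show ?thesis using p F k' p0 by auto
        qed
      qed
      show "{..<N} - {k' + p0 - N..<k'} \<subseteq> (\<lambda>p. (k' + p) mod N) ` {..<p0}"
      proof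
        fix x assume x: "x \<in> {..<N} - {k' + p0 - N..<k'}"
        show "x \<in> (\<lambda>p. (k' + p) mod N) ` {..<p0}"
        proof (cases "x \<ge> k'")
          case True
          then have "x = (k' + (x - k')) mod N" "x - k' < p0" using x False by auto
          then show ?thesis by blast
        next
          case F2: False
          then have xl: "x < k' + p0 - N" using x by auto
          have "k' + (x + N - k') = x + N" using k' by simp
          then have "(k' + (x + N - k')) mod N = x" using x by simp
          moreover have "x + N - k' < p0" using xl False k' by linarith
          ultimately show ?thesis by (metis image_eqI lessThan_iff)
        qed
      qed
    qed
    have "set L - cyc_interval L k m = lseg L (k' + p0 - N) k'"
    proof -
      have sub: "{..<N} - {k'+p0-N..<k'} \<subseteq> {..<length L}" using N_def by auto
      have "set L - cyc_interval L k m = (\<lambda>i. L ! i) ` ({..<length L} - ({..<N} - {k'+p0-N..<k'}))"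
        unfolding ci J using img_compl[OF assms(1) sub] by simp
      also have "{..<length L} - ({..<N} - {k'+p0-N..<k'}) = {k'+p0-N..<min k' (length L)}"
        using k' N_def by auto
      finally show ?thesis unfolding lseg_img .
    qed
    moreover have "1 \<le> k' + p0 - N" "k' + p0 - N \<le> k'" "k' \<le> length L" using False p0 k' N_def by auto
    ultimately show ?thesis by blast
  qed
qed


lemma lseg_ci:
  assumes "lo \<le> hi" "hi \<le> length L"
  shows "lseg L lo hi = cyc_interval L lo (hi - lo)"
proof (cases "lo = length L")
  case True
  then show ?thesis using assms unfolding lseg_def cyc_interval_def by simp
next
  case False
  then have "rotate lo L = drop lo L @ take lo L" using assms by (simp add: rotate_drop_take)
  then show ?thesis using assms unfolding lseg_def cyc_interval_def by simp
qed

lemma split_other: assumes "is_split X s" "E \<in> s" shows "s = {E, X - E}" "E \<subseteq> X"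
proof -
  from assms(1) obtain A where A: "A \<subseteq> X" "s = {A, X - A}" unfolding is_split_def by blast
  then show "s = {E, X - E}" using assms(2) by (auto simp: Diff_Diff_Int Int_absorb1 insert_commute)
  show "E \<subseteq> X" using A assms(2) by auto
qed

lemma circ_split_lin:
  assumes "distinct L" "L \<noteq> []" "set L = X" "circular_split X L s"
  shows "\<exists>E\<in>s. \<exists>lo hi. 1 \<le> lo \<and> lo \<le> hi \<and> hi \<le> length L \<and> E = lseg L lo hi"
proof -
  from assms(4) obtain k m where sp: "is_split X s" and s: "s = {cyc_interval L k m, X - cyc_interval L k m}"
    unfolding circular_split_def by blast
  from ci_lin[OF assms(1,2), of k m] obtain lo hi where
    h: "1 \<le> lo" "lo \<le> hi" "hi \<le> length L"
      "cyc_interval L k m = lseg L lo hi \<or> set L - cyc_interval L k m = lseg L lo hi" by blast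
  then show ?thesis using s assms(3) by blast
qed

lemma lin_circ_split:
  assumes "is_split X s" "E \<in> s" "E = lseg L lo hi" "lo \<le> hi" "hi \<le> length L"
  shows "circular_split X L s"
  unfolding circular_split_def using assms split_other[OF assms(1,2)] lseg_ci[OF assms(4,5)] by auto



lemma twist_lin:
  assumes d: "distinct (L2 @ L1)" and ne2: "L2 \<noteq> []" and ne1: "L1 \<noteq> []"
    and lo: "lo \<le> hi" "hi \<le> length (L2 @ L1)"
    and c: "lseg (L2 @ L1) lo hi \<subseteq> set L2 \<or> lseg (L2 @ L1) lo hi \<subseteq> set L1 \<or> set L1 \<subseteq> lseg (L2 @ L1) lo hi"
  shows "\<exists>lo' hi'. lo' \<le> hi' \<and> hi' \<le> length (L2 @ rev L1) \<and> lseg (L2 @ L1) lo hi = lseg (L2 @ rev L1) lo' hi'"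
proof -
  let ?B = "L2 @ L1" let ?B' = "L2 @ rev L1"
  define n2 where "n2 = length L2"
  define n1 where "n1 = length L1"
  have dis: "set L1 \<inter> set L2 = {}" using d by auto
  have mem: "\<And>i. i < length ?B \<Longrightarrow> ?B ! i \<in> lseg ?B lo hi \<longleftrightarrow> lo \<le> i \<and> i < hi"
    using lseg_mem[OF d] by blast
  show ?thesis
  proof (cases "lo = hi")
    case True
    then have "lseg ?B lo hi = lseg ?B' 0 0" by (simp add: lseg_def)
    then show ?thesis by fastforce
  next
    case False
    then have lh: "lo < hi" using lo by simp
    from c consider (A) "lseg ?B lo hi \<subseteq> set L2" | (B) "lseg ?B lo hi \<subseteq> set L1"
      | (C) "set L1 \<subseteq> lseg ?B lo hi" by blast
    then show ?thesis
    proof cases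
      case A
      have "hi \<le> n2"
      proof (rule ccontr)
        assume "\<not> hi \<le> n2"
        define i where "i = max lo n2"
        have i: "lo \<le> i" "i < hi" "n2 \<le> i" using lh \<open>\<not> hi \<le> n2\<close> unfolding i_def by auto
        have il: "i < length ?B" using i lo by simp
        have "?B ! i \<in> lseg ?B lo hi" using mem[OF il] i by simp
        moreover have "?B ! i = L1 ! (i - n2)" using i unfolding n2_def by (simp add: nth_append)
        moreover have "i - n2 < length L1" using il i unfolding n2_def by simp
        ultimately show False using A dis by (metis disjoint_iff nth_mem subsetD)
      qed
      then have "lseg ?B lo hi = lseg ?B' lo hi"
        unfolding lseg_def n2_def using lo by simp
      then show ?thesis using \<open>hi \<le> n2\<close> lo unfolding n2_def by (intro exI[of _ lo] exI[of _ hi]) simp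
    next
      case B
      have "n2 \<le> lo"
      proof (rule ccontr)
        assume "\<not> n2 \<le> lo"
        have il: "lo < length ?B" using lh lo by simp
        have "?B ! lo \<in> lseg ?B lo hi" using mem[OF il] lh by simp
        moreover have "?B ! lo = L2 ! lo" using \<open>\<not> n2 \<le> lo\<close> unfolding n2_def by (simp add: nth_append)
        moreover have "lo < length L2" using \<open>\<not> n2 \<le> lo\<close> unfolding n2_def by simp
        ultimately show False using B dis by (metis disjoint_iff nth_mem subsetD)
      qed
      have hb: "hi - n2 \<le> n1" using lo unfolding n1_def n2_def by simp
      have "lseg ?B lo hi = set (take (hi - lo) (drop (lo - n2) L1))"
        unfolding lseg_def n2_def using \<open>n2 \<le> lo\<close> n2_def by simp
      also have "\<dots> = set (drop (lo - n2) (take (hi - n2) L1))"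
        using \<open>n2 \<le> lo\<close> lh by (simp add: drop_take)
      also have "\<dots> = set (take (hi - lo) (drop (n1 - (hi - n2)) (rev L1)))"
        using \<open>n2 \<le> lo\<close> lh hb unfolding n1_def by (simp add: drop_rev take_rev min_def)
      also have "\<dots> = lseg ?B' (n2 + (n1 - (hi - n2))) (n2 + (n1 - (hi - n2)) + (hi - lo))"
        unfolding lseg_def n2_def by simp
      finally have eq: "lseg ?B lo hi = lseg ?B' (n2 + (n1 - (hi - n2))) (n2 + (n1 - (hi - n2)) + (hi - lo))" .
      have b1: "n2 + (n1 - (hi - n2)) + (hi - lo) \<le> length ?B'"
        using lo \<open>n2 \<le> lo\<close> hb lh unfolding n1_def n2_def by simp
      show ?thesis using eq b1 le_add1 by blast
    next
      case C
      have h: "hi = n2 + n1"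
      proof -
        have il: "n2 + (n1 - 1) < length ?B" using ne1 unfolding n1_def n2_def by simp
        have "?B ! (n2 + (n1 - 1)) = L1 ! (n1 - 1)" unfolding n2_def
          by (rule nth_append_length_plus)
        then have "?B ! (n2 + (n1 - 1)) \<in> set L1" using ne1 unfolding n1_def by simp
        then have "n2 + (n1 - 1) < hi" using mem[OF il] C by blast
        then show ?thesis using lo unfolding n1_def n2_def by simp
      qed
      have "lo \<le> n2"
      proof -
        have il: "n2 < length ?B" using ne1 unfolding n1_def n2_def by simp
        have "?B ! n2 = L1 ! 0" unfolding n2_def by (simp add: nth_append)
        then have "?B ! n2 \<in> set L1" using ne1 by simp
        then show ?thesis using mem[OF il] C by blast
      qed
      have "lseg ?B lo hi = set (drop lo L2) \<union> set L1"
        unfolding lseg_def h n1_def n2_def using \<open>lo \<le> n2\<close> n2_def by simp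
      also have "\<dots> = lseg ?B' lo hi"
        unfolding lseg_def h n1_def n2_def using \<open>lo \<le> n2\<close> n2_def by simp
      finally show ?thesis using lo h unfolding n1_def n2_def by (intro exI[of _ lo] exI[of _ hi]) simp
    qed
  qed
qed

lemma twist_set: "set (twist xs k m) = set xs"
proof -
  show ?thesis unfolding twist_def by (metis append_take_drop_id set_append set_rev set_rotate)
qed

lemma twist_distinct: "distinct (twist xs k m) = distinct xs"
proof -
  show ?thesis unfolding twist_def by (metis append_take_drop_id distinct_append distinct_rev distinct_rotate set_rev)
qed

lemma twist_length: "length (twist xs k m) = length xs"
  unfolding twist_def by simp

lemma twist_circ:
  assumes d: "distinct xs" and sx: "set xs = X" and m: "1 \<le> m" "m < length xs"
    and cs: "circular_system X xs S"
    and comp: "\<forall>s\<in>S. compatible {cyc_interval xs k m, X - cyc_interval xs k m} s"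
  shows "circular_system X (twist xs k m) S"
proof -
  define r where "r = rotate k xs"
  define L1 where "L1 = take m r"
  define L2 where "L2 = drop m r"
  have r: "r = L1 @ L2" unfolding L1_def L2_def by simp
  have lL1: "length L1 = m" unfolding L1_def r_def using m by simp
  have ne1: "L1 \<noteq> []" using lL1 m by auto
  have ne2: "L2 \<noteq> []" unfolding L2_def r_def using m by simp
  have dr: "distinct r" unfolding r_def using d by simp
  have "rotate m r = L2 @ L1" using rotate_append[of L1 L2] r lL1 by simp
  then have B: "L2 @ L1 = rotate (m + k) xs" unfolding r_def by (simp add: rotate_rotate)
  have dB: "distinct (L2 @ L1)" using dr r by auto
  have sB: "set (L2 @ L1) = X" using B sx by simp
  have csB: "circular_system X (L2 @ L1) S" using sys_equiv[OF _ cs] B ce_rot by metis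
  have I: "cyc_interval xs k m = set L1" unfolding cyc_interval_def L1_def r_def ..
  have XI: "X - set L1 = set L2" using dB sB by auto
  have csB': "circular_system X (L2 @ rev L1) S"
    unfolding circular_system_def
  proof
    fix s assume sS: "s \<in> S"
    then have cspl: "circular_split X (L2 @ L1) s" using csB unfolding circular_system_def by blast
    then have sp: "is_split X s" unfolding circular_split_def by blast
    obtain E lo hi where E: "E \<in> s" "1 \<le> lo" "lo \<le> hi" "hi \<le> length (L2 @ L1)" "E = lseg (L2 @ L1) lo hi"
      using circ_split_lin[OF dB _ sB cspl] ne2 by blast
    have sE: "s = {E, X - E}" and EX: "E \<subseteq> X" using split_other[OF sp E(1)] by auto
    have h0: "(L2 @ L1) ! 0 \<notin> E"
      using lseg_mem[OF dB, of 0 lo hi] E ne2 by simp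
    have h0': "(L2 @ L1) ! 0 \<in> set L2" using ne2 by (simp add: nth_append)
    have "compatible {set L1, X - set L1} s" using comp sS I by simp
    then obtain A1 A2 where A: "A1 \<in> {set L1, X - set L1}" "A2 \<in> {E, X - E}" "A1 \<inter> A2 = {}"
      unfolding compatible_def sE by blast
    have c: "E \<subseteq> set L2 \<or> E \<subseteq> set L1 \<or> set L1 \<subseteq> E"
    proof -
      consider "A1 = set L1" "A2 = E" | "A1 = set L1" "A2 = X - E" | "A1 = X - set L1" "A2 = E"
        | "A1 = X - set L1" "A2 = X - E" using A by blast
      then show ?thesis
      proof cases
        case 1 then show ?thesis using A EX XI by blast
      next
        case 2 then show ?thesis using A sB by auto
      next
        case 3 then show ?thesis using A EX by blast
      next
        case 4
        then have "set L2 \<subseteq> E" using A XI by blast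
        then show ?thesis using h0 h0' by blast
      qed
    qed
    obtain lo' hi' where "lo' \<le> hi'" "hi' \<le> length (L2 @ rev L1)" "E = lseg (L2 @ rev L1) lo' hi'"
      using twist_lin[OF dB ne2 ne1 E(3,4)] c E(5) by blast
    then show "circular_split X (L2 @ rev L1) s" using lin_circ_split[OF sp E(1)] by blast
  qed
  have "twist xs k m = rotate (length L2) (L2 @ rev L1)"
    unfolding twist_def using rotate_append[of L2 "rev L1"] L1_def L2_def r_def by simp
  then show ?thesis using sys_equiv[OF _ csB'] ce_rot by metis
qed

lemma step_pres:
  assumes "admissible_twist_step X S xs ys" "distinct xs" "set xs = X"
  shows "distinct ys \<and> set ys = X \<and> circular_system X ys S"
proof -
  from assms(1) obtain k m where cs: "circular_system X xs S" and m: "2 \<le> m" "m + 2 \<le> length xs"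
    and comp: "\<forall>s\<in>S. compatible {cyc_interval xs k m, X - cyc_interval xs k m} s"
    and ce: "circ_equiv (twist xs k m) ys"
    unfolding admissible_twist_step_def by blast
  have "circular_system X (twist xs k m) S"
    using twist_circ[OF assms(2,3) _ _ cs comp] m by simp
  moreover have "set ys = X" using ce_set[OF ce] twist_set[of xs k m] assms(3) by simp
  moreover have "distinct ys" using ce_distinct[OF ce] twist_distinct[of xs k m] assms(2) by simp
  ultimately show ?thesis using sys_equiv[OF ce] by blast
qed

lemma chain_pres:
  assumes "(admissible_twist_step X S)\<^sup>*\<^sup>* xs zs" "distinct xs" "set xs = X" "circular_system X xs S"
  shows "distinct zs \<and> set zs = X \<and> circular_system X zs S"
  using assms
proof (induction rule: rtranclp_induct)
  case base then show ?case by simp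
next
  case (step y z) then show ?case using step_pres by blast
qed



lemma step_equiv_left:
  assumes ce: "circ_equiv xs xs'" and st: "admissible_twist_step X S xs' ys"
    and cs: "circular_system X xs S"
  shows "admissible_twist_step X S xs ys"
proof -
  from st obtain k m where m: "2 \<le> m" "m + 2 \<le> length xs'"
    and comp: "\<forall>s\<in>S. compatible {cyc_interval xs' k m, X - cyc_interval xs' k m} s"
    and ce2: "circ_equiv (twist xs' k m) ys"
    unfolding admissible_twist_step_def by blast
  have len: "length xs' = length xs" using ce_length[OF ce] .
  from ce obtain r where "xs' = rotate r xs \<or> xs' = rotate r (rev xs)"
    unfolding circ_equiv_def by blast
  then show ?thesis
  proof
    assume x: "xs' = rotate r xs"
    have "cyc_interval xs' k m = cyc_interval xs (k + r) m" unfolding x ci_rot ..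
    moreover have "twist xs' k m = twist xs (k + r) m" unfolding x twist_def by (simp add: rotate_rotate)
    ultimately show ?thesis unfolding admissible_twist_step_def using cs m comp ce2 len by auto
  next
    assume x: "xs' = rotate r (rev xs)"
    define N where "N = length xs"
    define q where "q = N - (k + r) mod N"
    define ys0 where "ys0 = rotate q xs"
    have l0: "length ys0 = N" unfolding ys0_def N_def by simp
    have mN: "m \<le> N" "N - m < N" using m len unfolding N_def by auto
    have rk: "rotate k xs' = rev ys0" unfolding x ys0_def q_def N_def rotate_rotate
      using rotate_rev[of "k + r" xs] by simp
    have tw1: "twist xs' k m = drop (N - m) ys0 @ rev (take (N - m) ys0)"
      unfolding twist_def rk using l0 by (simp add: take_rev drop_rev)
    define k' where "k' = (N - m) + q"
    have "rotate k' xs = rotate (N - m) ys0" unfolding k'_def ys0_def rotate_rotate ..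
    also have "\<dots> = drop (N - m) ys0 @ take (N - m) ys0"
      using rotate_drop_take[of "N - m" ys0] l0 mN by simp
    finally have rk': "rotate k' xs = drop (N - m) ys0 @ take (N - m) ys0" .
    have t1: "take m (rotate k' xs) = drop (N - m) ys0" unfolding rk' using l0 mN by simp
    have d1: "drop m (rotate k' xs) = take (N - m) ys0" unfolding rk' using l0 mN by simp
    have tw2: "twist xs k' m = rev (drop (N - m) ys0) @ take (N - m) ys0"
      unfolding twist_def t1 d1 ..
    have "twist xs k' m = rotate (N - m) (rev (twist xs' k m))"
      unfolding tw1 tw2 using rotate_append[of "take (N - m) ys0" "rev (drop (N - m) ys0)"] l0 mN by simp
    then have "circ_equiv (twist xs' k m) (twist xs k' m)" using ce_rotrev by metis
    then have ce3: "circ_equiv (twist xs k' m) ys" using ce_trans[OF ce_sym ce2] by blast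
    have "cyc_interval xs' k m = cyc_interval xs k' m"
      unfolding cyc_interval_def rk t1 using l0 by (simp add: take_rev)
    then show ?thesis unfolding admissible_twist_step_def using cs m comp ce3 len by auto
  qed
qed



definition rk :: "'a list \<Rightarrow> 'a \<Rightarrow> nat" where
  "rk T x = (THE i. i < length T \<and> T ! i = x)"

lemma rk_nth: assumes "distinct T" "i < length T" shows "rk T (T ! i) = i"
  unfolding rk_def using assms by (auto intro!: the_equality simp: nth_eq_iff_index_eq)

lemma rk_in: assumes "distinct T" "x \<in> set T" shows "rk T x < length T" "T ! rk T x = x"
proof -
  obtain i where i: "i < length T" "T ! i = x" using assms(2) by (auto simp: in_set_conv_nth)
  then have "rk T x = i" using rk_nth[OF assms(1) i(1)] by simp
  then show "rk T x < length T" "T ! rk T x = x" using i by auto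
qed

definition dev :: "'a list \<Rightarrow> 'a list \<Rightarrow> nat" where
  "dev T L = (LEAST i. i = length T \<or> L ! i \<noteq> T ! i)"

definition mu :: "'a list \<Rightarrow> 'a list \<Rightarrow> nat" where
  "mu T L = (length T - dev T L) * (length T + 1) + (if dev T L < length T then rk T (L ! dev T L) else 0)"

lemma dev_le: "dev T L \<le> length T"
  unfolding dev_def by (rule Least_le) simp

lemma dev_agree: "i < dev T L \<Longrightarrow> L ! i = T ! i"
  unfolding dev_def using not_less_Least by blast

lemma dev_neq: "dev T L < length T \<Longrightarrow> L ! dev T L \<noteq> T ! dev T L"
  unfolding dev_def by (metis (mono_tags, lifting) LeastI less_irrefl)

lemma dev_ge: assumes "j \<le> length T" "\<And>i. i < j \<Longrightarrow> L ! i = T ! i" shows "j \<le> dev T L"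
proof (rule ccontr)
  assume "\<not> j \<le> dev T L"
  then have "dev T L < j" by simp
  then show False using dev_neq[of T L] assms by fastforce
qed

lemma dev_le2: assumes "j < length T" "L ! j \<noteq> T ! j" shows "dev T L \<le> j"
  unfolding dev_def using assms by (intro Least_le) simp



lemma lseg_elem: "x \<in> lseg L lo hi \<Longrightarrow> \<exists>i. i < length L \<and> lo \<le> i \<and> i < hi \<and> x = L ! i"
  unfolding lseg_img by auto

lemma compat_core:
  assumes dL: "distinct L" and dT: "distinct T" and lL: "length L = N" and lT: "length T = N"
    and sLT: "set L = set T"
    and j: "1 \<le> j" "j < e" "e < N"
    and agree: "\<And>i. i < j \<Longrightarrow> L ! i = T ! i"
    and Pe: "rk T (L ! e) < rk T (L ! j)"
    and after: "\<And>i. e < i \<Longrightarrow> i < N \<Longrightarrow> \<not> rk T (L ! i) < rk T (L ! j)"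
    and EL: "E = lseg L lo' hi'" and ET: "E = lseg T lo hi"
    and b: "hi' \<le> N" "hi \<le> N"
  shows "lseg L j (Suc e) \<inter> E = {} \<or> lseg L j (Suc e) \<subseteq> E \<or> E \<subseteq> lseg L j (Suc e)"
proof (rule ccontr)
  assume neg: "\<not> ?thesis"
  define P where "P i = rk T (L ! i)" for i
  have Pin: "P i < N" "T ! P i = L ! i" if "i < N" for i
  proof -
    have m: "L ! i \<in> set T" using that lL sLT nth_mem by metis
    show "P i < N" "T ! P i = L ! i" using rk_in[OF dT m] lT unfolding P_def by auto
  qed
  have memL: "L ! i \<in> E \<longleftrightarrow> lo' \<le> i \<and> i < hi'" if "i < N" for i
    using lseg_mem[OF dL, of i lo' hi'] that lL EL by simp
  have memT: "T ! p \<in> E \<longleftrightarrow> lo \<le> p \<and> p < hi" if "p < N" for p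
    using lseg_mem[OF dT, of p lo hi] that lT ET by simp
  have memI: "L ! i \<in> lseg L j (Suc e) \<longleftrightarrow> j \<le> i \<and> i \<le> e" if "i < N" for i
    using lseg_mem[OF dL, of i j "Suc e"] that lL by auto
  have Pj: "j \<le> P i" if "j \<le> i" "i < N" for i
  proof (rule ccontr)
    assume "\<not> j \<le> P i"
    then have "L ! (P i) = T ! (P i)" using agree by simp
    also have "\<dots> = L ! i" using Pin that by simp
    finally have "P i = i" using dL that Pin lL \<open>\<not> j \<le> P i\<close> by (simp add: nth_eq_iff_index_eq)
    then show False using that \<open>\<not> j \<le> P i\<close> by simp
  qed
  have Pprefix: "P i = i" if "i < j" for i
    using agree[OF that] rk_nth[OF dT, of i] that j lT unfolding P_def by simp
  from neg obtain x1 where x1: "x1 \<in> lseg L j (Suc e)" "x1 \<in> E" by blast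
  from neg obtain x2 where x2: "x2 \<in> lseg L j (Suc e)" "x2 \<notin> E" by blast
  from neg obtain x3 where x3: "x3 \<in> E" "x3 \<notin> lseg L j (Suc e)" by blast
  obtain i1 where i1: "i1 < N" "x1 = L ! i1" using lseg_elem[OF x1(1)] lL by blast
  obtain i2 where i2: "i2 < N" "x2 = L ! i2" using lseg_elem[OF x2(1)] lL by blast
  obtain i3 where i3: "i3 < N" "x3 = L ! i3" using lseg_elem[OF x3(1)[unfolded EL]] lL by blast
  have h1: "j \<le> i1" "i1 \<le> e" "lo' \<le> i1" "i1 < hi'" using x1 i1 memI memL by auto
  have h2: "j \<le> i2" "i2 \<le> e" "\<not> (lo' \<le> i2 \<and> i2 < hi')" using x2 i2 memI memL by auto
  have h3: "lo' \<le> i3" "i3 < hi'" "\<not> (j \<le> i3 \<and> i3 \<le> e)" using x3 i3 memI memL by auto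
  have jN: "j < N" using j by simp
  show False
  proof (cases "i3 < j")
    case True
    have hie: "hi' \<le> e" using h1 h2 h3 True by linarith
    have "lo' \<le> j - 1" "j - 1 < hi'" "j - 1 < N" using h3 True h1 jN by linarith+
    then have a1: "L ! (j - 1) \<in> E" using memL[of "j - 1"] by simp
    have "T ! (j - 1) \<in> E" using a1 agree[of "j - 1"] j by simp
    then have lo1: "lo \<le> j - 1" using memT[of "j - 1"] jN by simp
    have "L ! j \<in> E" using memL[OF jN] h1 h3 True by simp
    then have "T ! P j \<in> E" using Pin[OF jN] by simp
    then have hi1: "P j < hi" using memT[of "P j"] Pin[OF jN] by simp
    have e1: "j \<le> P e" "P e < P j" using Pj[of e] j Pe unfolding P_def by auto
    have "T ! P e \<in> E" using memT[of "P e"] Pin[of e] j lo1 hi1 e1 by simp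
    then have "L ! e \<in> E" using Pin[of e] j by simp
    then have "e < hi'" using memL[of e] j by simp
    then show False using hie by simp
  next
    case False
    then have gt: "e < i3" using h3 by simp
    have e1N: "Suc e < N" using gt h3 b by simp
    have jlo: "j < lo'" using h1 h2 h3 gt by linarith
    have "L ! e \<in> E" using memL[of e] j h1 h3 gt by simp
    then have A: "lo \<le> P e" "P e < hi" using memT[of "P e"] Pin[of e] j by auto
    have "L ! Suc e \<in> E" using memL[OF e1N] h1 h3 gt by simp
    then have B: "lo \<le> P (Suc e)" "P (Suc e) < hi" using memT[of "P (Suc e)"] Pin[OF e1N] by auto
    have ge: "P j \<le> P (Suc e)" using after[of "Suc e"] e1N unfolding P_def by simp
    have ne: "P (Suc e) \<noteq> P j"
    proof
      assume "P (Suc e) = P j"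
      then have "L ! Suc e = L ! j" using Pin[OF e1N] Pin[OF jN] by metis
      then show False using dL e1N jN j lL by (simp add: nth_eq_iff_index_eq)
    qed
    have "lo \<le> P j" "P j < hi" using A B Pe ge ne unfolding P_def by auto
    then have "T ! P j \<in> E" using memT[of "P j"] Pin[OF jN] by blast
    then have "L ! j \<in> E" using Pin[OF jN] by simp
    then have "lo' \<le> j" using memL[OF jN] by simp
    then show False using jlo by simp
  qed
qed



lemma key_step:
  assumes dT: "distinct T" and sT: "set T = X" and n4: "4 \<le> length T" and cT: "circular_system X T S"
    and dL: "distinct L" and sL: "set L = X" and h0: "L ! 0 = T ! 0" and cL: "circular_system X L S"
    and can: "rk T (L ! 1) < rk T (L ! (length T - 1))"
    and jN: "dev T L < length T"
  shows "\<exists>L'. admissible_twist_step X S L L' \<and> distinct L' \<and> set L' = X \<and> L' ! 0 = T ! 0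
     \<and> circular_system X L' S \<and> rk T (L' ! 1) < rk T (L' ! (length T - 1)) \<and> mu T L' < mu T L"
proof -
  define N where "N = length T"
  have lL: "length L = N" unfolding N_def using dL dT sL sT by (metis distinct_card)
  have sLT: "set L = set T" using sL sT by simp
  define j where "j = dev T L"
  have jN': "j < N" using jN unfolding j_def N_def .
  have agree: "L ! i = T ! i" if "i < j" for i using dev_agree that unfolding j_def by blast
  have neq: "L ! j \<noteq> T ! j" using dev_neq jN unfolding j_def by blast
  have j1: "1 \<le> j" using neq h0 by (cases j) auto
  define P where "P i = rk T (L ! i)" for i
  have Pin: "P i < N" "T ! P i = L ! i" if "i < N" for i
  proof -
    have m: "L ! i \<in> set T" using that lL sLT nth_mem by metis
    show "P i < N" "T ! P i = L ! i" using rk_in[OF dT m] N_def unfolding P_def by auto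
  qed
  define a where "a = P j"
  obtain c where c: "c < N" "L ! c = T ! j"
    using jN' lL sLT N_def by (metis in_set_conv_nth nth_mem)
  have Pc: "P c = j" using c rk_nth[OF dT jN'[unfolded N_def]] unfolding P_def by simp
  have cj: "j < c"
  proof -
    have "c \<noteq> j" using c neq by auto
    moreover have "\<not> c < j"
    proof
      assume "c < j"
      then have "T ! c = T ! j" using agree c by simp
      then show False using dT \<open>c < j\<close> jN' N_def by (simp add: nth_eq_iff_index_eq)
    qed
    ultimately show ?thesis by simp
  qed
  have Pj_ge: "j \<le> P i" if "j \<le> i" "i < N" for i
  proof (rule ccontr)
    assume "\<not> j \<le> P i"
    then have "L ! (P i) = T ! (P i)" using agree by simp
    also have "\<dots> = L ! i" using Pin that by simp
    finally have "P i = i" using dL that Pin lL \<open>\<not> j \<le> P i\<close> by (simp add: nth_eq_iff_index_eq)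
    then show False using that \<open>\<not> j \<le> P i\<close> by simp
  qed
  have ja: "j < a"
  proof -
    have "j \<le> a" using Pj_ge[of j] jN' unfolding a_def by simp
    moreover have "a \<noteq> j" using Pin[OF jN'] neq unfolding a_def by auto
    ultimately show ?thesis by simp
  qed
  define C where "C = {i. j < i \<and> i < N \<and> P i < a}"
  have Cfin: "finite C" unfolding C_def by simp
  have cC: "c \<in> C" unfolding C_def using cj c Pc ja by simp
  define e where "e = Max C"
  have eC: "e \<in> C" unfolding e_def using Cfin cC Max_in by blast
  have e: "j < e" "e < N" "P e < a" using eC unfolding C_def by auto
  have after: "\<not> P i < a" if "e < i" "i < N" for i
  proof
    assume "P i < a"
    then have "i \<in> C" unfolding C_def using that e by simp
    then have "i \<le> e" unfolding e_def using Cfin Max_ge by blast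
    then show False using that by simp
  qed
  define m where "m = Suc e - j"
  have m2: "2 \<le> m" using e unfolding m_def by simp
  have mN: "m + 2 \<le> N"
  proof (cases "j = 1")
    case True
    have "P 1 < P (N - 1)" using can unfolding P_def N_def by simp
    then have "\<not> P (N - 1) < a" unfolding a_def True by simp
    then have "e \<noteq> N - 1" using e by auto
    then show ?thesis using e True unfolding m_def by simp
  next
    case False
    then show ?thesis using e j1 unfolding m_def by simp
  qed
  have jm: "j + m = Suc e" unfolding m_def using e by simp
  have rotj: "rotate j L = drop j L @ take j L"
    using rotate_drop_take[of j L] jN' lL by simp
  have Iseg: "cyc_interval L j m = lseg L j (Suc e)"
    unfolding cyc_interval_def lseg_def rotj m_def using e lL by simp
  have comp: "\<forall>s\<in>S. compatible {cyc_interval L j m, X - cyc_interval L j m} s"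
  proof
    fix s assume sS: "s \<in> S"
    have csL: "circular_split X L s" using cL sS unfolding circular_system_def by blast
    have csT: "circular_split X T s" using cT sS unfolding circular_system_def by blast
    have sp: "is_split X s" using csL unfolding circular_split_def by blast
    have Lne: "L \<noteq> []" using lL n4 N_def by auto
    have Tne: "T \<noteq> []" using n4 by auto
    obtain E lo' hi' where E: "E \<in> s" "1 \<le> lo'" "lo' \<le> hi'" "hi' \<le> length L" "E = lseg L lo' hi'"
      using circ_split_lin[OF dL Lne sL csL] by blast
    obtain E2 lo hi where E2: "E2 \<in> s" "1 \<le> lo" "lo \<le> hi" "hi \<le> length T" "E2 = lseg T lo hi"
      using circ_split_lin[OF dT Tne sT csT] by blast
    have sE: "s = {E, X - E}" using split_other[OF sp E(1)] by simp
    have x0E: "T ! 0 \<notin> E" using lseg_mem[OF dL, of 0 lo' hi'] E h0 Lne by simp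
    have x0E2: "T ! 0 \<notin> E2" using lseg_mem[OF dT, of 0 lo hi] E2 Tne by simp
    have x0X: "T ! 0 \<in> X" using sT Tne by auto
    have EE: "E2 = E" using E2(1) sE x0E x0E2 x0X by auto
    have Pe': "rk T (L ! e) < rk T (L ! j)" using e(3) unfolding P_def a_def .
    have after': "\<And>i. e < i \<Longrightarrow> i < N \<Longrightarrow> \<not> rk T (L ! i) < rk T (L ! j)"
      using after unfolding P_def a_def by blast
    have ET: "E = lseg T lo hi" using E2(5) EE by simp
    have lT: "length T = N" using N_def by simp
    have b1: "hi' \<le> N" using E(4) lL by simp
    have b2: "hi \<le> N" using E2(4) N_def by simp
    have core: "lseg L j (Suc e) \<inter> E = {} \<or> lseg L j (Suc e) \<subseteq> E \<or> E \<subseteq> lseg L j (Suc e)"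
      using compat_core[OF dL dT lL lT sLT j1 e(1) e(2) agree Pe' after' E(5) ET b1 b2] .
    have IX: "lseg L j (Suc e) \<subseteq> X" using lseg_sub[of L j "Suc e"] sL by simp
    let ?I = "lseg L j (Suc e)"
    from core have "\<exists>A1\<in>{?I, X - ?I}. \<exists>A2\<in>{E, X - E}. A1 \<inter> A2 = {}"
    proof (elim disjE)
      assume "?I \<inter> E = {}" then show ?thesis by blast
    next
      assume "?I \<subseteq> E" then have "?I \<inter> (X - E) = {}" by blast
      then show ?thesis by blast
    next
      assume "E \<subseteq> ?I" then have "(X - ?I) \<inter> E = {}" by blast
      then show ?thesis by blast
    qed
    then show "compatible {cyc_interval L j m, X - cyc_interval L j m} s"
      unfolding compatible_def Iseg sE .
  qed
  define L' where "L' = take j L @ rev (take m (drop j L)) @ drop (j + m) L"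
  have tw: "twist L j m = (rev (take m (drop j L)) @ drop (j + m) L) @ take j L"
    unfolding twist_def rotj using e lL unfolding m_def by (simp add: add.commute)
  have ceL': "circ_equiv (twist L j m) L'"
    unfolding tw L'_def using rotate_append ce_rot by metis
  have step: "admissible_twist_step X S L L'"
    unfolding admissible_twist_step_def using cL m2 mN lL comp ceL' by auto
  have pres: "distinct L' \<and> set L' = X \<and> circular_system X L' S"
    using step_pres[OF step dL sL] .
  have lL': "length L' = N" unfolding L'_def using lL e unfolding m_def by simp
  have nthL': "L' ! i = (if i < j then L ! i else if i < j + m then L ! (j + m - 1 - (i - j)) else L ! i)"
    if "i < N" for i
  proof -
    have lt: "length (take j L) = j" using jN' lL by simp
    have lr: "length (rev (take m (drop j L))) = m" using lL e unfolding m_def by simp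
    show ?thesis
    proof (cases "i < j")
      case True then show ?thesis unfolding L'_def using lt by (simp add: nth_append)
    next
      case F1: False
      show ?thesis
      proof (cases "i < j + m")
        case True
        have "L' ! i = rev (take m (drop j L)) ! (i - j)"
          unfolding L'_def using lt lr F1 True by (simp add: nth_append)
        also have "\<dots> = L ! (j + m - 1 - (i - j))"
          using lr F1 True lL e unfolding m_def by (simp add: rev_nth) (metis add.commute)
        finally show ?thesis using F1 True by simp
      next
        case False
        have nl: "\<not> i - j < m" "\<not> i < j" using F1 False by simp_all
        have "L' ! i = (rev (take m (drop j L)) @ drop (j + m) L) ! (i - j)"
          unfolding L'_def using lt nl by (simp add: nth_append)
        also have "\<dots> = drop (j + m) L ! (i - j - m)"
          using lr nl by (simp add: nth_append)
        also have "\<dots> = L ! i" using F1 False that lL jm by simp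
        finally show ?thesis using F1 False by simp
      qed
    qed
  qed
  have L'0: "L' ! 0 = T ! 0" using nthL'[of 0] j1 h0 jN' by simp
  have L'j: "L' ! j = L ! e" using nthL'[of j] jN' m2 jm by simp
  have agree': "L' ! i = T ! i" if "i < j" for i using nthL'[of i] that jN' agree by simp
  have PL': "rk T (L' ! i) < N" "T ! rk T (L' ! i) = L' ! i" if "i < N" for i
  proof -
    have m: "L' ! i \<in> set T" using that lL' pres sT nth_mem by metis
    show "rk T (L' ! i) < N" "T ! rk T (L' ! i) = L' ! i" using rk_in[OF dT m] N_def by auto
  qed
  have can': "rk T (L' ! 1) < rk T (L' ! (N - 1))"
  proof (cases "j = 1")
    case True
    have a1: "L' ! 1 = L ! e" using L'j True by simp
    have "e \<noteq> N - 1"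
    proof
      assume "e = N - 1"
      have "P 1 < P (N - 1)" using can unfolding P_def N_def by simp
      then show False using e \<open>e = N - 1\<close> True unfolding a_def by simp
    qed
    then have "N - 1 \<ge> j + m" using e jm by simp
    then have a2: "L' ! (N - 1) = L ! (N - 1)" using nthL'[of "N - 1"] e by simp
    have "P e < P 1" using e True unfolding a_def by simp
    also have "P 1 < P (N - 1)" using can unfolding P_def N_def by simp
    finally show ?thesis using a1 a2 unfolding P_def by simp
  next
    case False
    then have j2: "2 \<le> j" using j1 by simp
    have a1: "L' ! 1 = T ! 1" using agree' j2 by simp
    have r1: "rk T (L' ! 1) = 1" unfolding a1 using rk_nth[OF dT] n4 by simp
    have N1: "N - 1 < N" "N - 1 \<noteq> 0" "N - 1 \<noteq> 1" using n4 N_def by auto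
    have dL': "distinct L'" using pres by simp
    have "L' ! (N - 1) \<noteq> L' ! 0" using nth_eq_iff_index_eq[OF dL', of "N - 1" 0] N1 lL' by simp
    moreover have "L' ! (N - 1) \<noteq> L' ! 1" using nth_eq_iff_index_eq[OF dL', of "N - 1" 1] N1 lL' by simp
    ultimately
    have "rk T (L' ! (N - 1)) \<noteq> 0" "rk T (L' ! (N - 1)) \<noteq> 1"
      using PL'(2)[OF N1(1)] L'0 a1 by metis+
    then show ?thesis using r1 by simp
  qed
  have devL: "dev T L = j" unfolding j_def ..
  have muL: "mu T L = (N - j) * (N + 1) + a"
    unfolding mu_def devL N_def[symmetric] a_def P_def using jN' by simp
  have dge: "j \<le> dev T L'" using dev_ge[of j T L'] agree' jN' N_def by simp
  have mu_lt: "mu T L' < mu T L"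
  proof (cases "P e = j")
    case True
    have "L' ! j = T ! j" using L'j Pin[of e] e True by simp
    then have "\<And>i. i < Suc j \<Longrightarrow> L' ! i = T ! i" using agree' less_Suc_eq by auto
    then have d2: "Suc j \<le> dev T L'" using dev_ge[of "Suc j" T L'] jN' N_def by simp
    have extra: "(if dev T L' < N then rk T (L' ! dev T L') else 0) < N + 1"
      using PL'(1)[of "dev T L'"] by (simp add: less_SucI)
    have "(N - dev T L') * (N + 1) \<le> (N - Suc j) * (N + 1)" using d2 by (intro mult_le_mono1) simp
    then have "mu T L' < (N - Suc j) * (N + 1) + (N + 1)"
      unfolding mu_def N_def[symmetric] using extra by linarith
    also have "\<dots> = (N - j) * (N + 1)"
    proof -
      have "N - j = Suc (N - Suc j)" using jN' by simp
      then show ?thesis by (simp only: mult_Suc)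
    qed
    also have "\<dots> \<le> mu T L" using muL by simp
    finally show ?thesis .
  next
    case False
    have "L' ! j \<noteq> T ! j"
    proof
      assume "L' ! j = T ! j"
      then have "P e = rk T (T ! j)" using L'j unfolding P_def by simp
      then show False using False rk_nth[OF dT] jN' N_def by simp
    qed
    then have "dev T L' \<le> j" using dev_le2[of j T L'] jN' N_def by simp
    then have dj: "dev T L' = j" using dge by simp
    have "mu T L' = (N - j) * (N + 1) + P e"
      unfolding mu_def dj N_def[symmetric] P_def using jN' L'j by simp
    then show ?thesis using muL e by simp
  qed
  have "rk T (L' ! 1) < rk T (L' ! (length T - 1))" using can' N_def by simp
  then show ?thesis using step pres L'0 mu_lt by blast
qed



lemma main_reach:
  assumes dT: "distinct T" and sT: "set T = X" and n4: "4 \<le> length T" and cT: "circular_system X T S"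
  shows "distinct L \<Longrightarrow> set L = X \<Longrightarrow> L ! 0 = T ! 0 \<Longrightarrow> circular_system X L S \<Longrightarrow>
     rk T (L ! 1) < rk T (L ! (length T - 1)) \<Longrightarrow>
     \<exists>zs. (admissible_twist_step X S)\<^sup>*\<^sup>* L zs \<and> circ_equiv zs T"
proof (induction "mu T L" arbitrary: L rule: less_induct)
  case less
  show ?case
  proof (cases "dev T L < length T")
    case True
    obtain L' where L': "admissible_twist_step X S L L'" "distinct L'" "set L' = X" "L' ! 0 = T ! 0"
      "circular_system X L' S" "rk T (L' ! 1) < rk T (L' ! (length T - 1))" "mu T L' < mu T L"
      using key_step[OF dT sT n4 cT less.prems True] by blast
    obtain zs where "(admissible_twist_step X S)\<^sup>*\<^sup>* L' zs" "circ_equiv zs T"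
      using less.hyps[OF L'(7) L'(2-6)] by blast
    then show ?thesis using L'(1) converse_rtranclp_into_rtranclp by metis
  next
    case False
    then have dN: "dev T L = length T" using dev_le[of T L] by simp
    have lL: "length L = length T" using less.prems(1,2) dT sT by (metis distinct_card)
    have "L = T"
    proof (rule nth_equalityI)
      show "length L = length T" by (rule lL)
      fix i assume "i < length L"
      then show "L ! i = T ! i" using dev_agree[of i T L] dN lL by simp
    qed
    then show ?thesis using ce_refl by blast
  qed
qed



lemma transfer_obt:
  assumes ce: "circ_equiv xs L0" and cs: "circular_system X xs S"
    and r: "(admissible_twist_step X S)\<^sup>*\<^sup>* L0 zs" and ce2: "circ_equiv zs T"
  shows "obtainable_by_admissible_twists X S xs T"
  using r
proof (cases rule: converse_rtranclpE)
  case base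
  then show ?thesis unfolding obtainable_by_admissible_twists_def
    using ce_trans[OF ce] ce2 by blast
next
  case (step y)
  have "admissible_twist_step X S xs y" using step_equiv_left[OF ce step(1) cs] .
  then have "(admissible_twist_step X S)\<^sup>*\<^sup>* xs zs" using step(2) converse_rtranclp_into_rtranclp by metis
  then show ?thesis unfolding obtainable_by_admissible_twists_def using ce2 by blast
qed

theorem theorem3:
  fixes X :: "'a set" and S :: "'a set set set" and \<pi>1 \<pi>2 :: "'a list"
  assumes "finite X" and "card X \<ge> 4"
    and "split_system X S"
    and "circ_ordering X \<pi>1" and "circ_ordering X \<pi>2"
    and "circular_system X \<pi>1 S"
  shows "circular_system X \<pi>2 S \<longleftrightarrow> obtainable_by_admissible_twists X S \<pi>1 \<pi>2"
proof
  assume "obtainable_by_admissible_twists X S \<pi>1 \<pi>2"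
  then obtain zs where zs: "(admissible_twist_step X S)\<^sup>*\<^sup>* \<pi>1 zs" "circ_equiv zs \<pi>2"
    unfolding obtainable_by_admissible_twists_def by blast
  have "circular_system X zs S"
    using chain_pres[OF zs(1)] assms(4,6) unfolding circ_ordering_def by blast
  then show "circular_system X \<pi>2 S" using sys_equiv[OF zs(2)] by blast
next
  assume cT: "circular_system X \<pi>2 S"
  define T where "T = \<pi>2"
  have dT: "distinct T" and sT: "set T = X" using assms(5) unfolding circ_ordering_def T_def by auto
  have d1: "distinct \<pi>1" and s1: "set \<pi>1 = X" using assms(4) unfolding circ_ordering_def by auto
  define N where "N = length T"
  have lT: "card X = N" unfolding N_def using dT sT distinct_card by blast
  have n4: "4 \<le> N" using assms(2) lT by simp
  have l1: "length \<pi>1 = N" using d1 s1 lT distinct_card by metis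
  have T0: "T ! 0 \<in> X" using sT n4 N_def by (metis nth_mem less_le_trans zero_less_numeral)
  obtain i where i: "i < N" "\<pi>1 ! i = T ! 0" using T0 s1 l1 by (metis in_set_conv_nth)
  define L1 where "L1 = rotate i \<pi>1"
  have lL1: "length L1 = N" unfolding L1_def using l1 by simp
  have dL1: "distinct L1" "set L1 = X" unfolding L1_def using d1 s1 by auto
  have L10: "L1 ! 0 = T ! 0" unfolding L1_def using nth_rotate[of 0 \<pi>1 i] i l1 n4 by simp
  have ce1: "circ_equiv \<pi>1 L1" unfolding L1_def by (rule ce_rot)
  have cs1: "circular_system X L1 S" using sys_equiv[OF ce1 assms(6)] .
  have inT: "x \<in> set T" if "x \<in> set L1" for x using that dL1 sT by simp
  obtain L0 where L0: "circ_equiv \<pi>1 L0" "distinct L0" "set L0 = X" "L0 ! 0 = T ! 0"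
    "circular_system X L0 S" "rk T (L0 ! 1) < rk T (L0 ! (length T - 1))"
  proof (cases "rk T (L1 ! 1) < rk T (L1 ! (length T - 1))")
    case True
    then show ?thesis using that ce1 dL1 L10 cs1 by blast
  next
    case False
    define L0 where "L0 = rotate (N - 1) (rev L1)"
    have ce0: "circ_equiv L1 L0" unfolding L0_def by (rule ce_rotrev)
    have lL0: "length L0 = N" unfolding L0_def using lL1 by simp
    have nth0: "L0 ! p = L1 ! (N - Suc ((N - 1 + p) mod N))" if "p < N" for p
      unfolding L0_def using that lL1 by (simp add: nth_rotate rev_nth)
    have a0: "L0 ! 0 = L1 ! 0" using nth0[of 0] n4 by simp
    have a1: "L0 ! 1 = L1 ! (N - 1)"
    proof -
      have "(N - 1 + 1) mod N = 0" using n4 by simp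
      then show ?thesis using nth0[of 1] n4 by simp
    qed
    have a2: "L0 ! (N - 1) = L1 ! 1"
    proof -
      have e: "N - 1 + (N - 1) = (N - 2) + N" using n4 by simp
      have "(N - 1 + (N - 1)) mod N = (N - 2) mod N" by (simp only: e mod_add_self2)
      also have "\<dots> = N - 2" using n4 by simp
      finally have "(N - 1 + (N - 1)) mod N = N - 2" .
      then show ?thesis using nth0[of "N - 1"] n4 by simp
    qed
    have ne: "L1 ! 1 \<noteq> L1 ! (N - 1)"
      using nth_eq_iff_index_eq[OF dL1(1), of 1 "N - 1"] n4 lL1 by simp
    have m1: "L1 ! 1 \<in> set T" "L1 ! (N - 1) \<in> set T" using inT n4 lL1 by (simp_all add: nth_mem)
    have "rk T (L1 ! 1) \<noteq> rk T (L1 ! (N - 1))"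
      using rk_in(2)[OF dT m1(1)] rk_in(2)[OF dT m1(2)] ne by metis
    then have "rk T (L0 ! 1) < rk T (L0 ! (length T - 1))"
      using False a1 a2 N_def by simp
    moreover have "circ_equiv \<pi>1 L0" using ce_trans[OF ce1 ce0] .
    moreover have "distinct L0" "set L0 = X" unfolding L0_def using dL1 by auto
    moreover have "circular_system X L0 S" using sys_equiv[OF ce0 cs1] .
    ultimately show ?thesis using that a0 L10 by simp
  qed
  obtain zs where zs: "(admissible_twist_step X S)\<^sup>*\<^sup>* L0 zs" "circ_equiv zs T"
  proof -
    have n4': "4 \<le> length T" using n4 N_def by simp
    have cT': "circular_system X T S" using cT unfolding T_def .
    show ?thesis using main_reach[OF dT sT n4' cT' L0(2-6)] that by blast
  qed
  show "obtainable_by_admissible_twists X S \<pi>1 \<pi>2"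
    using transfer_obt[OF L0(1) assms(6) zs] unfolding T_def .
qed


end
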